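(* For the Rayleigh fading channel, i.e. $y=hx+v$ with $v\sim\mathcal{CN}(0,1)$, perfect CSI at transmitter and receiver, and $|h|^2$ exponentially distributed with unit mean (density $e^{-t}$, $t\ge0$), and for fixed $A\ge1$, the capacity $C(\mathrm{SNR})$ under average power constraint $\mathrm{SNR}$ and peak power constraint $A\,\mathrm{SNR}$ satisfies $$\lim_{\mathrm{SNR}\to0}\frac{C(\mathrm{SNR})}{\mathrm{SNR}(1+\log A)}=1.$$
   Context: $C(\mathrm{SNR})=\sup\mathbf{E}[\log(1+P(h)|h|^2)]$ over measurable $P(h)\ge 0$ with $\mathbf{E}[P(h)]\le\mathrm{SNR}$ and $\max_hP(h)\le A\,\mathrm{SNR}$. Logarithms are natural. *)

theory Defs
  imports "HOL-Probability.Probability"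
begin

definition admissible_power :: "complex measure \<Rightarrow> real \<Rightarrow> real \<Rightarrow> (complex \<Rightarrow> real) set" where
  "admissible_power M A snr =
     {P. P \<in> borel_measurable M \<and> (\<forall>h. 0 \<le> P h) \<and> (\<forall>h. P h \<le> A * snr)
         \<and> (\<integral>h. P h \<partial>M) \<le> snr}"

definition capacity :: "complex measure \<Rightarrow> real \<Rightarrow> real \<Rightarrow> real" where
  "capacity M A snr =
     (SUP P \<in> admissible_power M A snr. \<integral>h. ln (1 + P h * (cmod h)\<^sup>2) \<partial>M)"

end

theory Submission
  imports Defs "HOL-Real_Asymp.Real_Asymp"
begin

lemma ftc_int:
  fixes f F :: "real \<Rightarrow> real"
  assumes fm: "f \<in> borel_measurable borel" and d: "\<And>x. a \<le> x \<Longrightarrow> DERIV F x :> f x"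
    and nn: "\<And>x. a \<le> x \<Longrightarrow> 0 \<le> f x" and lim: "(F \<longlongrightarrow> 0) at_top" and Fa: "F a \<le> 0"
  shows "has_bochner_integral lborel (\<lambda>x. f x * indicator {a..} x) (- F a)"
proof (rule has_bochner_integral_nn_integral)
  show "(\<lambda>x. f x * indicator {a..} x) \<in> borel_measurable lborel" using fm by simp
  show "AE x in lborel. 0 \<le> f x * indicator {a..} x" using nn by (auto simp: indicator_def)
  show "0 \<le> - F a" using Fa by simp
  have "(\<integral>\<^sup>+x. ennreal (f x) * indicator {a ..} x \<partial>lborel) = 0 - F a"
    by (rule nn_integral_FTC_atLeast[OF fm d nn lim])
  moreover have "(\<integral>\<^sup>+x. ennreal (f x * indicator {a..} x) \<partial>lborel) = (\<integral>\<^sup>+x. ennreal (f x) * indicator {a ..} x \<partial>lborel)"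
    by (rule nn_integral_cong) (auto simp: indicator_def)
  ultimately show "(\<integral>\<^sup>+x. ennreal (f x * indicator {a..} x) \<partial>lborel) = ennreal (- F a)" by simp
qed

lemma transfer:
  fixes M :: "complex measure" and g :: "real \<Rightarrow> real"
  assumes "sets M = sets borel"
    and D: "distr M lborel (\<lambda>h. (cmod h)\<^sup>2) = density lborel (exponential_density 1)"
    and gm: "g \<in> borel_measurable borel"
  shows "integrable M (\<lambda>h. g ((cmod h)\<^sup>2)) \<longleftrightarrow> integrable lborel (\<lambda>t. exponential_density 1 t * g t)"
    and "integral\<^sup>L M (\<lambda>h. g ((cmod h)\<^sup>2)) = integral\<^sup>L lborel (\<lambda>t. exponential_density 1 t * g t)"
proof -
  have Xm: "(\<lambda>h. (cmod h)\<^sup>2) \<in> measurable M lborel"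
    using assms(1) by (simp add: measurable_cong_sets[OF assms(1) refl])
  have gm': "g \<in> borel_measurable lborel" using gm by simp
  have em: "exponential_density 1 \<in> borel_measurable lborel" by simp
  have enn: "AE x in lborel. 0 \<le> exponential_density 1 x"
    by (auto simp: exponential_density_def)
  show "integrable M (\<lambda>h. g ((cmod h)\<^sup>2)) \<longleftrightarrow> integrable lborel (\<lambda>t. exponential_density 1 t * g t)"
    using integrable_distr_eq[OF Xm gm', symmetric] integrable_density[OF gm' em enn] D by simp
  show "integral\<^sup>L M (\<lambda>h. g ((cmod h)\<^sup>2)) = integral\<^sup>L lborel (\<lambda>t. exponential_density 1 t * g t)"
    using integral_distr[OF Xm gm', symmetric] integral_density[OF gm' em enn] D by simp
qed


lemma int_a:
  fixes c :: real assumes c: "0 \<le> c"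
  shows "has_bochner_integral lborel (\<lambda>t. exponential_density 1 t * (if c \<le> t then 1 else 0)) (exp (-c))"
proof -
  have "has_bochner_integral lborel (\<lambda>x. exp (-x) * indicator {c..} x) (- (- exp (-c)))"
    by (rule ftc_int[where F="\<lambda>x. - exp (-x)"]) (auto intro!: derivative_eq_intros, real_asymp)
  moreover have "(\<lambda>x. exp (-x) * indicator {c..} x) = (\<lambda>t. exponential_density 1 t * (if c \<le> t then 1 else 0))"
    using c by (auto simp: exponential_density_def indicator_def fun_eq_iff)
  ultimately show ?thesis by simp
qed

lemma int_b:
  fixes c :: real assumes c: "0 \<le> c"
  shows "has_bochner_integral lborel (\<lambda>t. exponential_density 1 t * (if c \<le> t then t else 0)) ((c+1) * exp (-c))"
proof -
  have "has_bochner_integral lborel (\<lambda>x. (x * exp (-x)) * indicator {c..} x) (- (- (c+1) * exp (-c)))"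
    using c apply (intro ftc_int[where F="\<lambda>x. - (x+1) * exp (-x)"])
    apply (auto intro!: derivative_eq_intros simp: algebra_simps)
    apply real_asymp
    by (smt (verit) exp_gt_zero mult_nonneg_nonneg)
  moreover have "(\<lambda>x. (x * exp (-x)) * indicator {c..} x) = (\<lambda>t. exponential_density 1 t * (if c \<le> t then t else 0))"
    using c by (auto simp: exponential_density_def indicator_def fun_eq_iff)
  ultimately show ?thesis by (simp add: algebra_simps)
qed

lemma int_c:
  fixes c :: real assumes c: "0 \<le> c"
  shows "has_bochner_integral lborel (\<lambda>t. exponential_density 1 t * max 0 (t - c)) (exp (-c))"
proof -
  have "has_bochner_integral lborel (\<lambda>x. ((x - c) * exp (-x)) * indicator {c..} x) (- (- (c-c+1) * exp (-c)))"
    using c by (intro ftc_int[where F="\<lambda>x. - (x-c+1) * exp (-x)"]) (auto intro!: derivative_eq_intros simp: algebra_simps, real_asymp)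
  moreover have "(\<lambda>x. ((x - c) * exp (-x)) * indicator {c..} x) = (\<lambda>t. exponential_density 1 t * max 0 (t - c))"
    using c by (auto simp: exponential_density_def indicator_def fun_eq_iff max_def)
  ultimately show ?thesis by simp
qed

lemma int_d:
  shows "has_bochner_integral lborel (\<lambda>t. exponential_density 1 t * t^2) 2"
proof -
  have "has_bochner_integral lborel (\<lambda>x. (x^2 * exp (-x)) * indicator {0..} x) (- (- ((0::real)^2+2*0+2) * exp (-0)))"
    by (intro ftc_int[where F="\<lambda>x. - (x^2+2*x+2) * exp (-x)"]) (auto intro!: derivative_eq_intros simp: algebra_simps power2_eq_square, real_asymp)
  moreover have "(\<lambda>x. (x^2 * exp (-x)) * indicator {0..} x) = (\<lambda>t. exponential_density 1 t * t^2)"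
    by (auto simp: exponential_density_def indicator_def fun_eq_iff)
  ultimately show ?thesis by simp
qed


lemma ln_lower: fixes y :: real assumes "0 \<le> y" shows "y - y^2 \<le> ln (1 + y)"
proof (cases "y \<le> 1")
  case True then show ?thesis using ln_one_plus_pos_lower_bound[OF assms] by simp
next
  case False
  then have "y - y^2 \<le> 0" by (simp add: power2_eq_square)
  moreover have "0 \<le> ln (1 + y)" using assms by simp
  ultimately show ?thesis by linarith
qed

lemma bounds:
  fixes M :: "complex measure" and A s :: real
  assumes P: "prob_space M"
    and S: "sets M = sets borel"
    and D: "distr M lborel (\<lambda>h. (cmod h)\<^sup>2) = density lborel (exponential_density 1)"
    and A: "1 \<le> A" and s: "0 < s"
  shows "capacity M A s \<le> s * (1 + ln A)" "s * (1 + ln A) - 2 * A^2 * s^2 \<le> capacity M A s"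
proof -
  interpret prob_space M by fact
  define c where "c = ln A"
  have c0: "0 \<le> c" using A by (simp add: c_def)
  have ec: "A * exp (-c) = 1" using A by (simp add: c_def exp_minus field_simps)
  have mM: "\<And>f :: complex \<Rightarrow> real. f \<in> borel_measurable M \<longleftrightarrow> f \<in> borel_measurable borel"
    using measurable_cong_sets[OF S refl] by blast
  note tr = transfer[OF S D]
  have up: "(\<integral>h. ln (1 + P h * (cmod h)\<^sup>2) \<partial>M) \<le> s * (1 + c)" if Pa: "P \<in> admissible_power M A s" for P
  proof -
    from Pa have Pm: "P \<in> borel_measurable M" and P0: "\<And>h. 0 \<le> P h" and PA: "\<And>h. P h \<le> A * s"
      and Pi: "(\<integral>h. P h \<partial>M) \<le> s" by (auto simp: admissible_power_def)
    have Pint: "integrable M P"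
      using P0 PA Pm by (intro integrable_const_bound[of _ "A * s"]) auto
    have gcm: "(\<lambda>t. max 0 (t - c)) \<in> borel_measurable borel" by simp
    have gci: "integrable M (\<lambda>h. max 0 ((cmod h)\<^sup>2 - c))"
      using tr(1)[OF gcm] int_c[OF c0] by (simp add: has_bochner_integral_iff)
    have gcv: "(\<integral>h. max 0 ((cmod h)\<^sup>2 - c) \<partial>M) = exp (-c)"
      using tr(2)[OF gcm] int_c[OF c0] by (simp add: has_bochner_integral_iff)
    define G where "G h = P h * c + A * s * max 0 ((cmod h)\<^sup>2 - c)" for h
    have Gi: "integrable M G" unfolding G_def using Pint gci by auto
    have "(\<integral>h. ln (1 + P h * (cmod h)\<^sup>2) \<partial>M) \<le> (\<integral>h. G h \<partial>M)"
    proof (rule integral_mono'[OF Gi])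
      fix h
      have "ln (1 + P h * (cmod h)\<^sup>2) \<le> P h * (cmod h)\<^sup>2" using P0[of h] by (intro ln_add_one_self_le_self) simp
      also have "\<dots> \<le> G h"
      proof (cases "c \<le> (cmod h)\<^sup>2")
        case True
        have "P h * ((cmod h)\<^sup>2 - c) \<le> A * s * ((cmod h)\<^sup>2 - c)" using True PA[of h] by (intro mult_right_mono) auto
        then show ?thesis using True by (simp add: G_def algebra_simps)
      next
        case False
        have "P h * (cmod h)\<^sup>2 \<le> P h * c" using False P0[of h] by (intro mult_left_mono) auto
        moreover have "0 \<le> A * s" using A s by simp
        ultimately show ?thesis using False by (simp add: G_def max_def)
      qed
      finally show "ln (1 + P h * (cmod h)\<^sup>2) \<le> G h" .
      show "0 \<le> G h" using P0[of h] c0 A s by (simp add: G_def)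
    qed
    also have "(\<integral>h. G h \<partial>M) = c * (\<integral>h. P h \<partial>M) + A * s * exp (-c)"
      unfolding G_def using Pint gci gcv by (simp add: mult.commute)
    also have "\<dots> \<le> c * s + s" 
    proof -
      have "c * (\<integral>h. P h \<partial>M) \<le> c * s" using Pi c0 by (rule mult_left_mono)
      moreover have "A * s * exp (-c) = s" using ec by (metis mult.assoc mult.commute mult.right_neutral)
      ultimately show ?thesis by linarith
    qed
    finally show ?thesis by (simp add: algebra_simps)
  qed
  define P0 where "P0 h = A * s * (if c \<le> (cmod h)\<^sup>2 then 1 else 0)" for h
  have gam: "(\<lambda>t::real. if c \<le> t then 1 else 0 :: real) \<in> borel_measurable borel" by simp
  have gai: "integrable M (\<lambda>h. if c \<le> (cmod h)\<^sup>2 then 1 else 0 :: real)"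
    using tr(1)[OF gam] int_a[OF c0] by (simp add: has_bochner_integral_iff)
  have gav: "(\<integral>h. (if c \<le> (cmod h)\<^sup>2 then 1 else 0 :: real) \<partial>M) = exp (-c)"
    using tr(2)[OF gam] int_a[OF c0] by (simp add: has_bochner_integral_iff)
  have P0m: "P0 \<in> borel_measurable M" unfolding P0_def mM by measurable
  have P0i: "(\<integral>h. P0 h \<partial>M) = s"
  proof -
    have "(\<integral>h. P0 h \<partial>M) = A * s * exp (-c)" unfolding P0_def using gav by simp
    also have "\<dots> = s" using ec by (metis mult.assoc mult.commute mult.right_neutral)
    finally show ?thesis .
  qed
  have P0a: "P0 \<in> admissible_power M A s"
    unfolding admissible_power_def
  proof (intro CollectI conjI allI)
    fix h show "0 \<le> P0 h" "P0 h \<le> A * s" using A s by (auto simp: P0_def)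
  qed (use P0m P0i in auto)
  have gbm: "(\<lambda>t::real. if c \<le> t then t else 0) \<in> borel_measurable borel" by simp
  have gbi: "integrable M (\<lambda>h. if c \<le> (cmod h)\<^sup>2 then (cmod h)\<^sup>2 else 0)"
    using tr(1)[OF gbm] int_b[OF c0] by (simp add: has_bochner_integral_iff)
  have gbv: "(\<integral>h. (if c \<le> (cmod h)\<^sup>2 then (cmod h)\<^sup>2 else 0) \<partial>M) = (c+1) * exp (-c)"
    using tr(2)[OF gbm] int_b[OF c0] by (simp add: has_bochner_integral_iff)
  have gdm: "(\<lambda>t::real. t^2) \<in> borel_measurable borel" by simp
  have gdi: "integrable M (\<lambda>h. ((cmod h)\<^sup>2)^2)"
    using tr(1)[OF gdm] int_d by (simp add: has_bochner_integral_iff)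
  have gdv: "(\<integral>h. ((cmod h)\<^sup>2)^2 \<partial>M) = 2"
    using tr(2)[OF gdm] int_d by (simp add: has_bochner_integral_iff)
  define L where "L h = A * s * (if c \<le> (cmod h)\<^sup>2 then (cmod h)\<^sup>2 else 0) - (A * s)^2 * ((cmod h)\<^sup>2)^2" for h
  have Li: "integrable M L" unfolding L_def using gbi gdi by auto
  have Lv: "(\<integral>h. L h \<partial>M) = s * (1 + c) - 2 * A^2 * s^2"
  proof -
    have "(\<integral>h. L h \<partial>M) = A * s * ((c+1) * exp (-c)) - (A * s)^2 * 2"
      unfolding L_def using gbi gdi gbv gdv by simp
    also have "A * s * ((c+1) * exp (-c)) = s * (1 + c) * (A * exp (-c))" by (simp add: algebra_simps)
    also have "\<dots> = s * (1 + c)" using ec by simp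
    finally show ?thesis by (simp add: power_mult_distrib)
  qed
  have lnm: "(\<lambda>h. ln (1 + P0 h * (cmod h)\<^sup>2)) \<in> borel_measurable M"
    using P0m unfolding mM by measurable
  have lni: "integrable M (\<lambda>h. ln (1 + P0 h * (cmod h)\<^sup>2))"
  proof (rule Bochner_Integration.integrable_bound[OF integrable_mult_right[OF gbi, of "A * s"] lnm])
    show "AE x in M. norm (ln (1 + P0 x * (cmod x)\<^sup>2)) \<le> norm (A * s * (if c \<le> (cmod x)\<^sup>2 then (cmod x)\<^sup>2 else 0))"
    proof (intro AE_I2)
      fix h
      have y0: "0 \<le> P0 h * (cmod h)\<^sup>2" using A s by (simp add: P0_def)
      have "norm (ln (1 + P0 h * (cmod h)\<^sup>2)) = ln (1 + P0 h * (cmod h)\<^sup>2)" using y0 by simp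
      also have "\<dots> \<le> P0 h * (cmod h)\<^sup>2" using y0 by (rule ln_add_one_self_le_self)
      also have "\<dots> = A * s * (if c \<le> (cmod h)\<^sup>2 then (cmod h)\<^sup>2 else 0)" by (simp add: P0_def)
      also have "\<dots> \<le> norm \<dots>" by simp
      finally show "norm (ln (1 + P0 h * (cmod h)\<^sup>2)) \<le> norm (A * s * (if c \<le> (cmod h)\<^sup>2 then (cmod h)\<^sup>2 else 0))" .
    qed
  qed
  have low: "s * (1 + c) - 2 * A^2 * s^2 \<le> (\<integral>h. ln (1 + P0 h * (cmod h)\<^sup>2) \<partial>M)"
  proof -
    have "(\<integral>h. L h \<partial>M) \<le> (\<integral>h. ln (1 + P0 h * (cmod h)\<^sup>2) \<partial>M)"
    proof (rule integral_mono[OF Li lni])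
      fix h
      define y where "y = P0 h * (cmod h)\<^sup>2"
      have y0: "0 \<le> y" using A s by (simp add: P0_def y_def)
      have "L h \<le> y - y^2"
      proof -
        have "y = A * s * (if c \<le> (cmod h)\<^sup>2 then (cmod h)\<^sup>2 else 0)" by (simp add: y_def P0_def)
        moreover have "y^2 \<le> (A * s)^2 * ((cmod h)\<^sup>2)^2"
          by (simp add: y_def P0_def power_mult_distrib)
        ultimately show ?thesis by (simp add: L_def)
      qed
      also have "\<dots> \<le> ln (1 + y)" using y0 by (rule ln_lower)
      finally show "L h \<le> ln (1 + P0 h * (cmod h)\<^sup>2)" by (simp add: y_def)
    qed
    then show ?thesis using Lv by simp
  qed
  have ne: "admissible_power M A s \<noteq> {}" using P0a by blast
  show "capacity M A s \<le> s * (1 + ln A)"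
    unfolding capacity_def c_def[symmetric] by (rule cSUP_least[OF ne up])
  have bdd: "bdd_above ((\<lambda>P. \<integral>h. ln (1 + P h * (cmod h)\<^sup>2) \<partial>M) ` admissible_power M A s)"
    using up by (intro bdd_aboveI2) auto
  show "s * (1 + ln A) - 2 * A^2 * s^2 \<le> capacity M A s"
    unfolding capacity_def c_def[symmetric] using low cSUP_upper[OF P0a bdd] by linarith
qed


theorem corollary2:
  fixes M :: "complex measure" and A :: real
  assumes "prob_space M"
    and "sets M = sets borel"
    and "distr M lborel (\<lambda>h. (cmod h)\<^sup>2) = density lborel (exponential_density 1)"
    and "1 \<le> A"
  shows "((\<lambda>snr. capacity M A snr / (snr * (1 + ln A))) \<longlongrightarrow> 1) (at_right 0)"
proof (rule tendsto_sandwich)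
  have k: "0 < 1 + ln A" using assms(4) by (smt (verit) ln_ge_zero)
  have ev: "eventually (\<lambda>s::real. 0 < s) (at_right 0)" by (simp add: eventually_at_right_less)
  show "eventually (\<lambda>s. 1 - 2 * A^2 * s / (1 + ln A) \<le> capacity M A s / (s * (1 + ln A))) (at_right 0)"
    using ev
  proof eventually_elim
    case (elim s)
    have "s * (1 + ln A) - 2 * A^2 * s^2 \<le> capacity M A s" using bounds(2)[OF assms elim] .
    then have "(s * (1 + ln A) - 2 * A^2 * s^2) / (s * (1 + ln A)) \<le> capacity M A s / (s * (1 + ln A))"
      using elim k by (intro divide_right_mono) auto
    moreover have "(s * (1 + ln A) - 2 * A^2 * s^2) / (s * (1 + ln A)) = 1 - 2 * A^2 * s / (1 + ln A)"
    proof -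
      define K where "K = 1 + ln A"
      have "K \<noteq> 0" "s \<noteq> 0" using k elim by (auto simp: K_def)
      then have "(s * K - 2 * A^2 * s^2) / (s * K) = 1 - 2 * A^2 * s / K"
        by (simp add: diff_divide_distrib power2_eq_square)
      then show ?thesis by (simp add: K_def)
    qed
    ultimately show ?case by simp
  qed
  show "eventually (\<lambda>s. capacity M A s / (s * (1 + ln A)) \<le> 1) (at_right 0)"
    using ev
  proof eventually_elim
    case (elim s)
    show ?case using bounds(1)[OF assms elim] elim k by (simp add: divide_le_eq_1)
  qed
  have "((\<lambda>s. 1 - 2 * A^2 * s / (1 + ln A)) \<longlongrightarrow> 1 - 2 * A^2 * 0 / (1 + ln A)) (at_right 0)"
    using k by (intro tendsto_intros) auto
  then show "((\<lambda>s. 1 - 2 * A^2 * s / (1 + ln A)) \<longlongrightarrow> 1) (at_right 0)" by simp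
qed (rule tendsto_const)

end
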